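(* For all $g\in L^2(V)$, $\|\mathcal{L}g\|_{L^2(V)}^2=\langle g,\mathcal{L}^2g\rangle\le\|g\|_{L^2(V)}^2$.
   Context: Setting: $V\subset\mathbb{R}^3$ is a bounded convex domain. The total cross-section $\sigma$ is a function on $V$ with $0<\sigma_{\min}\le\sigma({\bf r})\le\sigma_{\max}$ for all ${\bf r}\in V$. The optical path length is $\tau({\bf r},{\bf r}')=\int_{l({\bf r},{\bf r}')}\sigma({\bf z})\,\mathrm{d}{\bf z}$, the integral of $\sigma$ along the line segment $l({\bf r},{\bf r}')$ joining ${\bf r}$ and ${\bf r}'$. The integral operator $\mathcal{K}$ is $(\mathcal{K}v)({\bf r})=\int_V k({\bf r},{\bf r}')v({\bf r}')\,\mathrm{d}{\bf r}'$ with kernel $k({\bf r},{\bf r}')=\dfrac{\exp(-\tau({\bf r},{\bf r}'))}{4\pi\|{\bf r}-{\bf r}'\|_2^2}$. $\mathcal{L}:=\sigma^{1/2}\mathcal{K}\sigma^{1/2}$, i.e. $\mathcal{L}g=\sigma^{1/2}\,\mathcal{K}(\sigma^{1/2}g)$. $\langle\cdot,\cdot\rangle$ denotes the $L^2(V)$ inner product (real-valued functions). *)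

theory Defs
  imports "HOL-Analysis.Analysis"
begin

definition optical_path :: "(real^3 \<Rightarrow> real) \<Rightarrow> real^3 \<Rightarrow> real^3 \<Rightarrow> real" where
  "optical_path \<sigma> r r' = norm (r - r') * (LINT t:{0..1}|lborel. \<sigma> (r + t *\<^sub>R (r' - r)))"

definition transport_kernel :: "(real^3 \<Rightarrow> real) \<Rightarrow> real^3 \<Rightarrow> real^3 \<Rightarrow> real" where
  "transport_kernel \<sigma> r r' = exp (- optical_path \<sigma> r r') / (4 * pi * (norm (r - r'))\<^sup>2)"

definition K_op :: "(real^3) set \<Rightarrow> (real^3 \<Rightarrow> real) \<Rightarrow> (real^3 \<Rightarrow> real) \<Rightarrow> real^3 \<Rightarrow> real" where
  "K_op V \<sigma> v r = (LINT r':V|lebesgue. transport_kernel \<sigma> r r' * v r')"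

definition L_op :: "(real^3) set \<Rightarrow> (real^3 \<Rightarrow> real) \<Rightarrow> (real^3 \<Rightarrow> real) \<Rightarrow> real^3 \<Rightarrow> real" where
  "L_op V \<sigma> g r = sqrt (\<sigma> r) * K_op V \<sigma> (\<lambda>r'. sqrt (\<sigma> r') * g r') r"

definition L2_inner :: "(real^3) set \<Rightarrow> (real^3 \<Rightarrow> real) \<Rightarrow> (real^3 \<Rightarrow> real) \<Rightarrow> real" where
  "L2_inner V f g = (LINT r:V|lebesgue. f r * g r)"

definition L2_norm :: "(real^3) set \<Rightarrow> (real^3 \<Rightarrow> real) \<Rightarrow> real" where
  "L2_norm V f = sqrt (LINT r:V|lebesgue. (f r)\<^sup>2)"

definition in_L2 :: "(real^3) set \<Rightarrow> (real^3 \<Rightarrow> real) \<Rightarrow> bool" where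
  "in_L2 V g \<longleftrightarrow> g \<in> borel_measurable (restrict_space lebesgue V) \<and>
                 set_integrable lebesgue V (\<lambda>r. (g r)\<^sup>2)"

end

theory Submission
  imports Defs "HOL-Analysis.Analysis" "HOL-Real_Asymp.Real_Asymp"
begin


lemma abs_schur:
  fixes M :: "'a measure" and kern :: "'a \<Rightarrow> 'a \<Rightarrow> real" and w g :: "'a \<Rightarrow> real"
  assumes sf: "sigma_finite_measure M"
    and km[measurable]: "(\<lambda>(x,y). kern x y) \<in> borel_measurable (M \<Otimes>\<^sub>M M)"
    and wm[measurable]: "w \<in> borel_measurable M" and gm[measurable]: "g \<in> borel_measurable M"
    and kn: "\<And>x y. kern x y \<ge> 0" and wn: "\<And>x. w x \<ge> 0"
    and ks: "\<And>x y. kern x y = kern y x"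
    and KB: "\<And>x. (\<integral>\<^sup>+ y. ennreal (kern x y * w y) \<partial>M) \<le> 1"
    and g2: "integrable M (\<lambda>x. (g x)\<^sup>2)"
  defines "h \<equiv> \<lambda>x. sqrt (w x) * (\<integral> y. kern x y * (sqrt (w y) * g y) \<partial>M)"
  defines "Lh \<equiv> \<lambda>x. sqrt (w x) * (\<integral> y. kern x y * (sqrt (w y) * h y) \<partial>M)"
  shows "h \<in> borel_measurable M \<and> Lh \<in> borel_measurable M \<and> (\<integral> x. (h x)\<^sup>2 \<partial>M) = (\<integral> x. g x * Lh x \<partial>M) \<and> (\<integral> x. (h x)\<^sup>2 \<partial>M) \<le> (\<integral> x. (g x)\<^sup>2 \<partial>M)"
proof -
  interpret M: sigma_finite_measure M by (rule sf)
  interpret P: pair_sigma_finite M M ..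
  have hm[measurable]: "h \<in> borel_measurable M" unfolding h_def by measurable
  define B where "B x = (\<integral>\<^sup>+ y. ennreal (kern x y * (g y)\<^sup>2) \<partial>M)" for x
  have pw: "ennreal ((h x)\<^sup>2) \<le> ennreal (w x) * B x" if xs: "x \<in> space M" for x
  proof -
    have kx[measurable]: "(\<lambda>y. kern x y) \<in> borel_measurable M"
      using measurable_compose[OF measurable_Pair1'[OF xs] km] by simp
    let ?f = "\<lambda>y. kern x y * (sqrt (w y) * g y)"
    have "ennreal (norm (\<integral> y. ?f y \<partial>M)) \<le> (\<integral>\<^sup>+ y. ennreal (norm (?f y)) \<partial>M)"
    proof (cases "integrable M ?f")
      case True thus ?thesis by (rule integral_norm_bound_ennreal)
    next
      case False thus ?thesis by (simp add: not_integrable_integral_eq)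
    qed
    also have "(\<integral>\<^sup>+ y. ennreal (norm (?f y)) \<partial>M) = 
       (\<integral>\<^sup>+ y. ennreal (sqrt (kern x y * w y)) * ennreal (sqrt (kern x y * (g y)\<^sup>2)) \<partial>M)"
      apply (rule nn_integral_cong)
      using kn[of x] wn by (auto simp: abs_mult real_sqrt_mult ennreal_mult[symmetric] real_sqrt_abs
            intro!: arg_cong[where f=ennreal])
    finally have A: "ennreal (norm (\<integral> y. ?f y \<partial>M)) \<le> \<dots>" .
    have "(ennreal (norm (\<integral> y. ?f y \<partial>M)))\<^sup>2 \<le> (\<integral>\<^sup>+ y. ennreal (sqrt (kern x y * w y)) * ennreal (sqrt (kern x y * (g y)\<^sup>2)) \<partial>M)\<^sup>2"
      using A by (intro power_mono) auto
    also have "\<dots> \<le> (\<integral>\<^sup>+ y. (ennreal (sqrt (kern x y * w y)))^2 \<partial>M) * (\<integral>\<^sup>+ y. (ennreal (sqrt (kern x y * (g y)\<^sup>2)))^2 \<partial>M)"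
      by (rule Cauchy_Schwarz_nn_integral) measurable
    also have "(\<integral>\<^sup>+ y. (ennreal (sqrt (kern x y * w y)))^2 \<partial>M) = (\<integral>\<^sup>+ y. ennreal (kern x y * w y) \<partial>M)"
      using kn wn by (intro nn_integral_cong) (subst ennreal_power, auto)
    also have "(\<integral>\<^sup>+ y. (ennreal (sqrt (kern x y * (g y)\<^sup>2)))^2 \<partial>M) = B x"
      using kn unfolding B_def by (intro nn_integral_cong) (subst ennreal_power, auto)
    also have "(\<integral>\<^sup>+ y. ennreal (kern x y * w y) \<partial>M) * B x \<le> 1 * B x"
      by (intro mult_right_mono KB) auto
    finally have C: "(ennreal (norm (\<integral> y. ?f y \<partial>M)))\<^sup>2 \<le> B x" by simp
    have "ennreal ((h x)\<^sup>2) = ennreal (w x) * (ennreal (norm (\<integral> y. ?f y \<partial>M)))\<^sup>2"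
    proof -
      have "(h x)\<^sup>2 = w x * (norm (\<integral> y. ?f y \<partial>M))\<^sup>2"
        unfolding h_def using wn[of x] by (simp add: power_mult_distrib)
      moreover have "ennreal ((norm (\<integral> y. ?f y \<partial>M))\<^sup>2) = (ennreal (norm (\<integral> y. ?f y \<partial>M)))\<^sup>2"
        by (subst ennreal_power) auto
      ultimately show ?thesis using wn[of x] by (simp add: ennreal_mult)
    qed
    also have "\<dots> \<le> ennreal (w x) * B x" using C by (intro mult_left_mono) auto
    finally show ?thesis .
  qed
  have "(\<integral>\<^sup>+ x. ennreal ((h x)\<^sup>2) \<partial>M) \<le> (\<integral>\<^sup>+ x. ennreal (w x) * B x \<partial>M)"
    by (intro nn_integral_mono pw)
  also have "\<dots> = (\<integral>\<^sup>+ x. (\<integral>\<^sup>+ y. ennreal (w x * kern x y * (g y)\<^sup>2) \<partial>M) \<partial>M)"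
    unfolding B_def using kn wn
    by (intro nn_integral_cong) (simp add: nn_integral_cmult[symmetric] ennreal_mult[symmetric] mult.assoc)
  also have "\<dots> = (\<integral>\<^sup>+ y. (\<integral>\<^sup>+ x. ennreal (w x * kern x y * (g y)\<^sup>2) \<partial>M) \<partial>M)"
    by (rule P.Fubini'[symmetric]) measurable
  also have "\<dots> = (\<integral>\<^sup>+ y. ennreal ((g y)\<^sup>2) * (\<integral>\<^sup>+ x. ennreal (kern y x * w x) \<partial>M) \<partial>M)"
    using kn wn ks
    by (intro nn_integral_cong) (simp add: nn_integral_cmult[symmetric] ennreal_mult[symmetric] mult_ac)
  also have "\<dots> \<le> (\<integral>\<^sup>+ y. ennreal ((g y)\<^sup>2) * 1 \<partial>M)"
    by (intro nn_integral_mono mult_left_mono KB) auto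
  finally have hg: "(\<integral>\<^sup>+ x. ennreal ((h x)\<^sup>2) \<partial>M) \<le> (\<integral>\<^sup>+ y. ennreal ((g y)\<^sup>2) \<partial>M)" by simp
  have gfin: "(\<integral>\<^sup>+ y. ennreal ((g y)\<^sup>2) \<partial>M) < \<infinity>"
    using g2 unfolding integrable_iff_bounded by (simp add: abs_of_nonneg)
  have h2: "integrable M (\<lambda>x. (h x)\<^sup>2)"
    unfolding integrable_iff_bounded using hg gfin by (auto simp: abs_of_nonneg)
  have ineq: "(\<integral> x. (h x)\<^sup>2 \<partial>M) \<le> (\<integral> x. (g x)\<^sup>2 \<partial>M)"
    using hg gfin by (subst (1 2) integral_eq_nn_integral) (auto simp: enn2real_mono)
  define \<Phi> where "\<Phi> x y = h x * sqrt (w x) * kern x y * (sqrt (w y) * g y)" for x y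
  have Pm[measurable]: "(\<lambda>(x,y). \<Phi> x y) \<in> borel_measurable (M \<Otimes>\<^sub>M M)"
    unfolding \<Phi>_def by measurable
  have F1: "(\<integral>\<^sup>+ x. (\<integral>\<^sup>+ y. ennreal (kern x y * w y * (h x)\<^sup>2) \<partial>M) \<partial>M) < \<infinity>"
  proof -
    have "(\<integral>\<^sup>+ x. (\<integral>\<^sup>+ y. ennreal (kern x y * w y * (h x)\<^sup>2) \<partial>M) \<partial>M)
        = (\<integral>\<^sup>+ x. ennreal ((h x)\<^sup>2) * (\<integral>\<^sup>+ y. ennreal (kern x y * w y) \<partial>M) \<partial>M)"
      using kn wn
      by (intro nn_integral_cong) (simp add: nn_integral_cmult[symmetric] ennreal_mult[symmetric] mult_ac)
    also have "\<dots> \<le> (\<integral>\<^sup>+ x. ennreal ((h x)\<^sup>2) * 1 \<partial>M)"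
      by (intro nn_integral_mono mult_left_mono KB) auto
    finally show ?thesis using hg gfin by simp
  qed
  have F2: "(\<integral>\<^sup>+ x. (\<integral>\<^sup>+ y. ennreal (kern x y * w x * (g y)\<^sup>2) \<partial>M) \<partial>M) < \<infinity>"
  proof -
    have "(\<integral>\<^sup>+ x. (\<integral>\<^sup>+ y. ennreal (kern x y * w x * (g y)\<^sup>2) \<partial>M) \<partial>M)
        = (\<integral>\<^sup>+ y. (\<integral>\<^sup>+ x. ennreal (kern x y * w x * (g y)\<^sup>2) \<partial>M) \<partial>M)"
      by (rule P.Fubini'[symmetric]) measurable
    also have "\<dots> = (\<integral>\<^sup>+ y. ennreal ((g y)\<^sup>2) * (\<integral>\<^sup>+ x. ennreal (kern y x * w x) \<partial>M) \<partial>M)"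
      using kn wn ks
      by (intro nn_integral_cong) (simp add: nn_integral_cmult[symmetric] ennreal_mult[symmetric] mult_ac)
    also have "\<dots> \<le> (\<integral>\<^sup>+ y. ennreal ((g y)\<^sup>2) * 1 \<partial>M)"
      by (intro nn_integral_mono mult_left_mono KB) auto
    finally show ?thesis using gfin by simp
  qed
  have bnd: "norm (\<Phi> x y) \<le> (kern x y * w y * (h x)\<^sup>2 + kern x y * w x * (g y)\<^sup>2)" for x y
  proof -
    have "2 * (sqrt (w y) * \<bar>h x\<bar>) * (sqrt (w x) * \<bar>g y\<bar>) \<le> (sqrt (w y) * \<bar>h x\<bar>)\<^sup>2 + (sqrt (w x) * \<bar>g y\<bar>)\<^sup>2"
      by (rule sum_squares_bound)
    also have "\<dots> = w y * (h x)\<^sup>2 + w x * (g y)\<^sup>2" using wn by (simp add: power_mult_distrib)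
    finally have "2 * (sqrt (w y) * \<bar>h x\<bar>) * (sqrt (w x) * \<bar>g y\<bar>) \<le> w y * (h x)\<^sup>2 + w x * (g y)\<^sup>2" .
    hence "kern x y * (2 * (sqrt (w y) * \<bar>h x\<bar>) * (sqrt (w x) * \<bar>g y\<bar>)) \<le> kern x y * (w y * (h x)\<^sup>2 + w x * (g y)\<^sup>2)"
      using kn by (rule mult_left_mono) 
    moreover have "norm (\<Phi> x y) = kern x y * ((sqrt (w y) * \<bar>h x\<bar>) * (sqrt (w x) * \<bar>g y\<bar>))"
      unfolding \<Phi>_def using kn[of x y] wn by (simp add: abs_mult mult_ac)
    moreover have "0 \<le> kern x y * ((sqrt (w y) * \<bar>h x\<bar>) * (sqrt (w x) * \<bar>g y\<bar>))"
      using kn[of x y] wn by simp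
    ultimately show ?thesis by (simp add: algebra_simps)
  qed
  have "(\<integral>\<^sup>+ z. ennreal (norm (\<Phi> (fst z) (snd z))) \<partial>(M \<Otimes>\<^sub>M M)) 
      \<le> (\<integral>\<^sup>+ z. ennreal ((kern (fst z) (snd z) * w (snd z) * (h (fst z))\<^sup>2 + kern (fst z) (snd z) * w (fst z) * (g (snd z))\<^sup>2)) \<partial>(M \<Otimes>\<^sub>M M))"
    by (intro nn_integral_mono ennreal_leI bnd)
  also have "\<dots> = (\<integral>\<^sup>+ x. (\<integral>\<^sup>+ y. ennreal ((kern x y * w y * (h x)\<^sup>2 + kern x y * w x * (g y)\<^sup>2)) \<partial>M) \<partial>M)"
    by (rule M.nn_integral_fst[symmetric, where f="\<lambda>z. ennreal ((kern (fst z) (snd z) * w (snd z) * (h (fst z))\<^sup>2 + kern (fst z) (snd z) * w (fst z) * (g (snd z))\<^sup>2))", simplified]) measurable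
  also have "\<dots> = (\<integral>\<^sup>+ x. ((\<integral>\<^sup>+ y. ennreal (kern x y * w y * (h x)\<^sup>2) \<partial>M) + (\<integral>\<^sup>+ y. ennreal (kern x y * w x * (g y)\<^sup>2) \<partial>M)) \<partial>M)"
    using kn wn
    by (intro nn_integral_cong) (simp add: nn_integral_add[symmetric])
  also have "\<dots> = ((\<integral>\<^sup>+ x. (\<integral>\<^sup>+ y. ennreal (kern x y * w y * (h x)\<^sup>2) \<partial>M) \<partial>M) + (\<integral>\<^sup>+ x. (\<integral>\<^sup>+ y. ennreal (kern x y * w x * (g y)\<^sup>2) \<partial>M) \<partial>M))"
    by (simp add: nn_integral_add)
  also have "\<dots> < \<infinity>" using F1 F2 by simp
  finally have Pint: "integrable (M \<Otimes>\<^sub>M M) (\<lambda>(x,y). \<Phi> x y)"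
    unfolding integrable_iff_bounded by (simp add: case_prod_beta)
  have e1: "(\<integral> y. \<Phi> x y \<partial>M) = (h x)\<^sup>2" for x
    unfolding \<Phi>_def h_def
    by (simp add: mult.assoc integral_mult_right_zero power2_eq_square)
  have e2: "(\<integral> x. \<Phi> x y \<partial>M) = g y * Lh y" for y
  proof -
    have "(\<integral> x. \<Phi> x y \<partial>M) = (\<integral> x. (g y * sqrt (w y)) * (kern y x * (sqrt (w x) * h x)) \<partial>M)"
      unfolding \<Phi>_def by (rule Bochner_Integration.integral_cong) (auto simp: ks mult_ac)
    also have "\<dots> = (g y * sqrt (w y)) * (\<integral> x. kern y x * (sqrt (w x) * h x) \<partial>M)"
      by (rule integral_mult_right_zero)
    finally show ?thesis unfolding Lh_def by (simp only: mult.assoc)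
  qed
  have "(\<integral> x. (h x)\<^sup>2 \<partial>M) = (\<integral> x. g x * Lh x \<partial>M)"
    using P.Fubini_integral[OF Pint] e1 e2 by simp
  moreover have "Lh \<in> borel_measurable M" unfolding Lh_def by measurable
  ultimately show ?thesis using ineq hm by simp
qed


lemma exp_tail:
  fixes c a :: real assumes c: "c > 0"
  shows "(\<integral>\<^sup>+ u. ennreal (c * exp (- c * u)) * indicator {a..} u \<partial>lborel) = ennreal (exp (- c * a))"
proof -
  have "(\<integral>\<^sup>+ u. ennreal (c * exp (- c * u)) * indicator {a..} u \<partial>lborel) = ennreal (0 - (- exp (- c * a)))"
  proof (rule nn_integral_FTC_atLeast)
    show "((\<lambda>u. - exp (- c * u)) \<longlongrightarrow> 0) at_top" using c by real_asymp
  qed (use c in \<open>auto intro!: derivative_eq_intros\<close>)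
  thus ?thesis by simp
qed

lemma exp_moment:
  fixes c :: real assumes c: "c > 0"
  shows "(\<integral>\<^sup>+ u. ennreal (c * exp (- c * u) * u) * indicator {0..} u \<partial>lborel) = ennreal (1 / c)"
proof -
  have "(\<integral>\<^sup>+ u. ennreal (c * exp (- c * u) * u) * indicator {0..} u \<partial>lborel) = ennreal (0 - (- (0 + 1/c) * exp (- c * 0)))"
  proof (rule nn_integral_FTC_atLeast)
    show "((\<lambda>u. - (u + 1/c) * exp (- c * u)) \<longlongrightarrow> 0) at_top" using c by real_asymp
  qed (use c in \<open>auto intro!: derivative_eq_intros simp: field_simps\<close>)
  thus ?thesis by simp
qed



lemma indef_meas:
  fixes \<psi> :: "real \<Rightarrow> real"
  assumes \<psi>m[measurable]: "\<psi> \<in> borel_measurable borel"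
  shows "(\<lambda>s. LINT u:{0..s}|lborel. \<psi> u) \<in> borel_measurable borel"
proof -
  have "(\<lambda>p::real\<times>real. (if 0 \<le> snd p \<and> snd p \<le> fst p then 1 else 0) * \<psi> (snd p)) \<in> borel_measurable (borel \<Otimes>\<^sub>M borel)"
    by measurable
  hence "(\<lambda>(s,u). indicator {0..s} u *\<^sub>R \<psi> u) \<in> borel_measurable (borel \<Otimes>\<^sub>M lborel)"
    by (subst measurable_cong_sets[OF sets_pair_measure_cong[OF refl sets_lborel] refl])
       (simp add: case_prod_beta indicator_def)
  thus ?thesis unfolding set_lebesgue_integral_def by (rule lborel.borel_measurable_lebesgue_integral)
qed

lemma one_dim:
  fixes \<psi> :: "real \<Rightarrow> real" and c Mb :: real
  assumes \<psi>m[measurable]: "\<psi> \<in> borel_measurable borel" and \<psi>n: "\<And>s. 0 \<le> \<psi> s"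
    and \<psi>b: "\<And>s. \<psi> s \<le> Mb" and c: "c > 0"
  shows "(\<integral>\<^sup>+ s. ennreal (\<psi> s * exp (- c * (LINT u:{0..s}|lborel. \<psi> u))) * indicator {0<..} s \<partial>lborel) \<le> ennreal (1/c)"
proof -
  define F where "F s = (LINT u:{0..s}|lborel. \<psi> u)" for s
  have Mb0: "0 \<le> Mb" using \<psi>n[of 0] \<psi>b[of 0] by linarith
  have Iint: "integrable lborel (\<lambda>u. indicator A u * \<psi> u)" if "A \<in> sets borel" "emeasure lborel A < \<infinity>" for A
  proof (rule Bochner_Integration.integrable_bound)
    show "integrable lborel (\<lambda>u. Mb * indicator A u)"
      using that by (intro integrable_mult_right integrable_real_indicator) auto
    show "(\<lambda>u. indicator A u * \<psi> u) \<in> borel_measurable lborel" using that by measurable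
    show "AE x in lborel. norm (indicator A x * \<psi> x) \<le> norm (Mb * indicator A x)"
      using \<psi>n \<psi>b Mb0 by (auto split: split_indicator)
  qed
  have Fdef: "F s = (\<integral> u. indicator {0..s} u * \<psi> u \<partial>lborel)" for s
    unfolding F_def set_lebesgue_integral_def by simp
  have Fn: "F s \<ge> 0" for s unfolding Fdef using \<psi>n by (intro Bochner_Integration.integral_nonneg) (simp add: mult_nonneg_nonneg)
  have Fm[measurable]: "F \<in> borel_measurable borel"
  proof -
    have "(\<lambda>p::real\<times>real. (if 0 \<le> snd p \<and> snd p \<le> fst p then 1 else 0) * \<psi> (snd p)) \<in> borel_measurable (borel \<Otimes>\<^sub>M borel)"
      by measurable
    hence "(\<lambda>(s,u). indicator {0..s} u * \<psi> u) \<in> borel_measurable (borel \<Otimes>\<^sub>M lborel)"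
      by (subst measurable_cong_sets[OF sets_pair_measure_cong[OF refl sets_lborel] refl])
         (simp add: case_prod_beta indicator_def)
    thus ?thesis unfolding Fdef[abs_def] by (rule lborel.borel_measurable_lebesgue_integral)
  qed
  have Flip: "F t \<le> F s + Mb * (t - s)" if "0 \<le> s" "s \<le> t" for s t
  proof -
    have "F t - F s = (\<integral> u. indicator {s<..t} u * \<psi> u \<partial>lborel)"
      unfolding Fdef
      by (subst Bochner_Integration.integral_diff[symmetric]) (use that in \<open>auto intro!: Iint Bochner_Integration.integral_cong split: split_indicator\<close>)
    also have "\<dots> \<le> (\<integral> u. Mb * indicator {s<..t} u \<partial>lborel)"
      by (intro integral_mono Iint integrable_mult_right integrable_real_indicator) (use \<psi>b that in \<open>auto split: split_indicator\<close>)
    also have "\<dots> = Mb * (t - s)" using that by simp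
    finally show ?thesis by simp
  qed
  have Fle: "(\<integral>\<^sup>+ s. ennreal (\<psi> s) * indicator {0<..b} s \<partial>lborel) \<le> ennreal (F b)" for b
  proof -
    have "(\<integral>\<^sup>+ s. ennreal (\<psi> s) * indicator {0<..b} s \<partial>lborel) \<le> (\<integral>\<^sup>+ s. ennreal (indicator {0..b} s * \<psi> s) \<partial>lborel)"
      by (intro nn_integral_mono) (auto split: split_indicator)
    also have "\<dots> = ennreal (F b)" unfolding Fdef
      by (rule nn_integral_eq_integral) (use \<psi>n in \<open>auto intro!: Iint simp: emeasure_lborel_Icc_eq split: split_indicator\<close>)
    finally show ?thesis .
  qed
  have layer: "(\<integral>\<^sup>+ s. ennreal (\<psi> s) * indicator {s. 0 < s \<and> F s \<le> u} s \<partial>lborel) \<le> ennreal u * indicator {0..} u" for u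
  proof (cases "u < 0")
    case True
    hence "{s. 0 < s \<and> F s \<le> u} = {}" using Fn by (auto simp: not_le intro: less_le_trans)
    thus ?thesis by simp
  next
    case False
    let ?N = "density lborel (\<lambda>s. ennreal (\<psi> s))"
    define A where "A n = {s. 0 < s \<and> F s \<le> u \<and> s \<le> real n}" for n::nat
    have Am[measurable]: "A n \<in> sets borel" for n unfolding A_def by measurable
    have "(\<integral>\<^sup>+ s. ennreal (\<psi> s) * indicator {s. 0 < s \<and> F s \<le> u} s \<partial>lborel) = emeasure ?N {s. 0 < s \<and> F s \<le> u}"
      by (subst emeasure_density) auto
    moreover have "{s. 0 < s \<and> F s \<le> u} = (\<Union>n. A n)"
      unfolding A_def using real_arch_simple by auto
    ultimately have "(\<integral>\<^sup>+ s. ennreal (\<psi> s) * indicator {s. 0 < s \<and> F s \<le> u} s \<partial>lborel) = emeasure ?N (\<Union>n. A n)" by metis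
    also have "emeasure ?N (\<Union>n. A n) = (SUP n. emeasure ?N (A n))"
      by (rule SUP_emeasure_incseq[symmetric]) (auto simp: A_def incseq_def intro: order_trans)
    also have "\<dots> \<le> ennreal u"
    proof (rule SUP_least)
      fix n
      have An: "emeasure ?N (A n) = (\<integral>\<^sup>+ s. ennreal (\<psi> s) * indicator (A n) s \<partial>lborel)"
        by (subst emeasure_density) auto
      show "emeasure ?N (A n) \<le> ennreal u"
      proof (cases "A n = {}")
        case True thus ?thesis by simp
      next
        case False
        define S where "S = {s. 0 \<le> s \<and> s \<le> real n \<and> F s \<le> u}"
        define b where "b = Sup S"
        have AS: "A n \<subseteq> S" unfolding A_def S_def by auto
        have Sne: "S \<noteq> {}" using AS False by auto
        have Sbdd: "bdd_above S" unfolding S_def by (auto intro: bdd_aboveI[of _ "real n"])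
        have hb: "s \<le> b" if "s \<in> S" for s unfolding b_def using that Sbdd by (rule cSup_upper)
        have b0: "0 \<le> b" using Sne hb S_def by force
        have Fb: "F b \<le> u"
        proof (rule field_le_epsilon)
          fix e :: real assume e: "0 < e"
          have "b - e / (Mb + 1) < b" using e Mb0 by simp
          then obtain s where s: "s \<in> S" "b - e / (Mb + 1) < s"
            using less_cSup_iff[OF Sne Sbdd] unfolding b_def by blast
          have "F b \<le> F s + Mb * (b - s)" using Flip[of s b] s hb unfolding S_def by auto
          also have "Mb * (b - s) \<le> Mb * (e / (Mb + 1))"
            using s Mb0 by (intro mult_left_mono) auto
          also have "Mb * (e / (Mb + 1)) \<le> e" using Mb0 e by (simp add: field_simps)
          finally show "F b \<le> u + e" using s unfolding S_def by auto
        qed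
        have "(\<integral>\<^sup>+ s. ennreal (\<psi> s) * indicator (A n) s \<partial>lborel) \<le> (\<integral>\<^sup>+ s. ennreal (\<psi> s) * indicator {0<..b} s \<partial>lborel)"
        proof (intro nn_integral_mono)
          fix s show "ennreal (\<psi> s) * indicator (A n) s \<le> ennreal (\<psi> s) * indicator {0<..b} s"
            using AS hb by (auto simp: A_def split: split_indicator)
        qed
        also have "\<dots> \<le> ennreal (F b)" by (rule Fle)
        also have "\<dots> \<le> ennreal u" using Fb by (rule ennreal_leI)
        finally show ?thesis using An by simp
      qed
    qed
    finally show ?thesis using False by simp
  qed
  have [measurable]: "Measurable.pred (borel \<Otimes>\<^sub>M borel) (\<lambda>x::real\<times>real. snd x \<in> {F (fst x)..})"
    unfolding atLeast_iff by measurable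
  have "(\<integral>\<^sup>+ s. ennreal (\<psi> s * exp (- c * F s)) * indicator {0<..} s \<partial>lborel)
      = (\<integral>\<^sup>+ s. (\<integral>\<^sup>+ u. ennreal (\<psi> s) * indicator {0<..} s * (ennreal (c * exp (- c * u)) * indicator {F s..} u) \<partial>lborel) \<partial>lborel)"
  proof (intro nn_integral_cong)
    fix s
    have "ennreal (\<psi> s * exp (- c * F s)) * indicator {0<..} s = (ennreal (\<psi> s) * indicator {0<..} s) * ennreal (exp (- c * F s))"
      using \<psi>n[of s] by (simp add: ennreal_mult mult_ac)
    also have "\<dots> = (ennreal (\<psi> s) * indicator {0<..} s) * (\<integral>\<^sup>+ u. ennreal (c * exp (- c * u)) * indicator {F s..} u \<partial>lborel)"
      by (simp only: exp_tail[OF c])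
    also have "\<dots> = (\<integral>\<^sup>+ u. ennreal (\<psi> s) * indicator {0<..} s * (ennreal (c * exp (- c * u)) * indicator {F s..} u) \<partial>lborel)"
      by (rule nn_integral_cmult[symmetric]) measurable
    finally show "ennreal (\<psi> s * exp (- c * F s)) * indicator {0<..} s = \<dots>" .
  qed
  also have "\<dots> = (\<integral>\<^sup>+ u. (\<integral>\<^sup>+ s. ennreal (\<psi> s) * indicator {0<..} s * (ennreal (c * exp (- c * u)) * indicator {F s..} u) \<partial>lborel) \<partial>lborel)"
    by (rule lborel_pair.Fubini'[symmetric]) measurable
  also have "\<dots> = (\<integral>\<^sup>+ u. ennreal (c * exp (- c * u)) * (\<integral>\<^sup>+ s. ennreal (\<psi> s) * indicator {s. 0 < s \<and> F s \<le> u} s \<partial>lborel) \<partial>lborel)"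
    by (intro nn_integral_cong) (auto simp: nn_integral_cmult[symmetric] mult_ac intro!: nn_integral_cong split: split_indicator)
  also have "\<dots> \<le> (\<integral>\<^sup>+ u. ennreal (c * exp (- c * u)) * (ennreal u * indicator {0..} u) \<partial>lborel)"
    by (intro nn_integral_mono mult_left_mono layer) auto
  also have "\<dots> = (\<integral>\<^sup>+ u. ennreal (c * exp (- c * u) * u) * indicator {0..} u \<partial>lborel)"
    using c by (intro nn_integral_cong) (auto simp: ennreal_mult split: split_indicator)
  also have "\<dots> = ennreal (1 / c)" by (rule exp_moment[OF c])
  finally show ?thesis unfolding F_def .
qed


lemma nn_scale3:
  fixes g :: "real^3 \<Rightarrow> ennreal" and c :: real
  assumes [measurable]: "g \<in> borel_measurable borel" and c: "c > 0"
  shows "(\<integral>\<^sup>+ x. g x \<partial>lborel) = ennreal (c^3) * (\<integral>\<^sup>+ y. g (c *\<^sub>R y) \<partial>lborel)"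
proof -
  have E: "(lborel :: (real^3) measure) = density (distr lborel borel (\<lambda>x. 0 + c *\<^sub>R x)) (\<lambda>_. \<bar>c\<bar>^DIM(real^3))"
    using c by (intro lborel_affine) simp
  have "(\<integral>\<^sup>+ x. g x \<partial>lborel) = (\<integral>\<^sup>+ x. g x \<partial>(density (distr lborel borel (\<lambda>x. 0 + c *\<^sub>R x)) (\<lambda>_. \<bar>c\<bar>^DIM(real^3))))"
    by (subst (1) E) (rule refl)
  also have "\<dots> = (\<integral>\<^sup>+ x. ennreal (\<bar>c\<bar>^DIM(real^3)) * g x \<partial>(distr lborel borel (\<lambda>x. 0 + c *\<^sub>R x)))"
    by (subst nn_integral_density) auto
  also have "\<dots> = (\<integral>\<^sup>+ y. ennreal (\<bar>c\<bar>^DIM(real^3)) * g (0 + c *\<^sub>R y) \<partial>lborel)"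
    by (subst nn_integral_distr) auto
  also have "\<dots> = ennreal (c^3) * (\<integral>\<^sup>+ y. g (c *\<^sub>R y) \<partial>lborel)"
    using c by (subst nn_integral_cmult) auto
  finally show ?thesis .
qed



lemma ln2_int:
  fixes a :: real assumes a: "a > 0"
  shows "(\<integral>\<^sup>+ s. ennreal (1 / s) * indicator {a/2..a} s \<partial>lborel) = ennreal (ln 2)"
proof -
  have "(\<integral>\<^sup>+ s. ennreal (1 / s) * indicator {a/2..a} s \<partial>lborel) = ennreal (ln a - ln (a/2))"
    by (rule nn_integral_FTC_Icc) (use a in \<open>auto intro!: derivative_eq_intros\<close>)
  also have "ln a - ln (a/2) = ln 2" using a by (simp add: ln_div)
  finally show ?thesis .
qed

lemma shell:
  fixes f :: "real^3 \<Rightarrow> ennreal"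
  assumes fm[measurable]: "f \<in> borel_measurable borel"
  defines "S \<equiv> {y::real^3. 1 \<le> norm y \<and> norm y \<le> 2}"
  shows "(\<integral>\<^sup>+ y. indicator S y * (\<integral>\<^sup>+ s. f (s *\<^sub>R y) * ennreal (s^2) * indicator {0<..} s \<partial>lborel) \<partial>lborel)
       = ennreal (ln 2) * (\<integral>\<^sup>+ x. f x \<partial>lborel)"
proof -
  have Sm[measurable]: "S \<in> sets borel" unfolding S_def by measurable
  have "(\<integral>\<^sup>+ y. indicator S y * (\<integral>\<^sup>+ s. f (s *\<^sub>R y) * ennreal (s^2) * indicator {0<..} s \<partial>lborel) \<partial>lborel)
      = (\<integral>\<^sup>+ y. (\<integral>\<^sup>+ s. indicator S y * (f (s *\<^sub>R y) * ennreal (s^2) * indicator {0<..} s) \<partial>lborel) \<partial>lborel)"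
    by (intro nn_integral_cong) (simp add: nn_integral_cmult)
  also have "\<dots> = (\<integral>\<^sup>+ s. (\<integral>\<^sup>+ y. indicator S y * (f (s *\<^sub>R y) * ennreal (s^2) * indicator {0<..} s) \<partial>lborel) \<partial>lborel)"
    by (rule lborel_pair.Fubini'[symmetric]) measurable
  also have "\<dots> = (\<integral>\<^sup>+ s. (\<integral>\<^sup>+ x. ennreal (1 / s) * indicator {0<..} s * indicator S ((1 / s) *\<^sub>R x) * f x \<partial>lborel) \<partial>lborel)"
  proof (rule nn_integral_cong)
    fix s :: real
    show "(\<integral>\<^sup>+ y. indicator S y * (f (s *\<^sub>R y) * ennreal (s^2) * indicator {0<..} s) \<partial>lborel)
        = (\<integral>\<^sup>+ x. ennreal (1 / s) * indicator {0<..} s * indicator S ((1 / s) *\<^sub>R x) * f x \<partial>lborel)"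
    proof (cases "s > 0")
      case False thus ?thesis by simp
    next
      case True
      have "(\<integral>\<^sup>+ x. indicator S ((1 / s) *\<^sub>R x) * f x \<partial>lborel)
          = ennreal (s^3) * (\<integral>\<^sup>+ y. indicator S ((1 / s) *\<^sub>R (s *\<^sub>R y)) * f (s *\<^sub>R y) \<partial>lborel)"
        by (rule nn_scale3) (use True in auto)
      also have "(\<lambda>y. indicator S ((1 / s) *\<^sub>R (s *\<^sub>R y)) * f (s *\<^sub>R y)) = (\<lambda>y. indicator S y * f (s *\<^sub>R y))"
        using True by simp
      finally have A: "(\<integral>\<^sup>+ x. indicator S ((1 / s) *\<^sub>R x) * f x \<partial>lborel) = ennreal (s^3) * (\<integral>\<^sup>+ y. indicator S y * f (s *\<^sub>R y) \<partial>lborel)" .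
      have "(\<integral>\<^sup>+ x. ennreal (1 / s) * indicator {0<..} s * indicator S ((1 / s) *\<^sub>R x) * f x \<partial>lborel)
          = ennreal (1/s) * (\<integral>\<^sup>+ x. indicator S ((1 / s) *\<^sub>R x) * f x \<partial>lborel)"
        using True by (subst nn_integral_cmult[symmetric]) (auto simp: mult.assoc)
      also have "\<dots> = ennreal (1/s) * ennreal (s^3) * (\<integral>\<^sup>+ y. indicator S y * f (s *\<^sub>R y) \<partial>lborel)"
        by (simp add: A mult.assoc)
      also have "ennreal (1/s) * ennreal (s^3) = ennreal (s^2)"
        using True by (simp add: ennreal_mult[symmetric] power3_eq_cube power2_eq_square)
      also have "ennreal (s^2) * (\<integral>\<^sup>+ y. indicator S y * f (s *\<^sub>R y) \<partial>lborel)
          = (\<integral>\<^sup>+ y. indicator S y * (f (s *\<^sub>R y) * ennreal (s^2) * indicator {0<..} s) \<partial>lborel)"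
        using True by (subst nn_integral_cmult[symmetric]) (auto simp: mult_ac)
      finally show ?thesis by simp
    qed
  qed
  also have "\<dots> = (\<integral>\<^sup>+ x. (\<integral>\<^sup>+ s. ennreal (1 / s) * indicator {0<..} s * indicator S ((1 / s) *\<^sub>R x) * f x \<partial>lborel) \<partial>lborel)"
    by (rule lborel_pair.Fubini') measurable
  also have "\<dots> = (\<integral>\<^sup>+ x. ennreal (ln 2) * f x \<partial>lborel)"
  proof (rule nn_integral_cong_AE)
    show "AE x in lborel. (\<integral>\<^sup>+ s. ennreal (1 / s) * indicator {0<..} s * indicator S ((1 / s) *\<^sub>R x) * f x \<partial>lborel) = ennreal (ln 2) * f x"
    proof (rule eventually_mono[OF AE_lborel_singleton[of 0]])
      fix x :: "real^3" assume x: "x \<noteq> 0"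
      have "(\<integral>\<^sup>+ s. ennreal (1 / s) * indicator {0<..} s * indicator S ((1 / s) *\<^sub>R x) * f x \<partial>lborel)
          = (\<integral>\<^sup>+ s. (ennreal (1 / s) * indicator {norm x / 2..norm x} s) * f x \<partial>lborel)"
      proof (intro nn_integral_cong)
        fix s :: real
        have "indicator {0<..} s * indicator S ((1 / s) *\<^sub>R x) = (indicator {norm x / 2..norm x} s :: ennreal)"
        proof (cases "s > 0")
          case True
          have "((1 / s) *\<^sub>R x \<in> S) \<longleftrightarrow> (s \<in> {norm x / 2..norm x})"
            using True x by (auto simp: S_def field_simps)
          thus ?thesis using True by (simp split: split_indicator)
        next
          case False
          have "norm x > 0" using x by simp
          hence "s \<notin> {norm x / 2..norm x}" using False by (simp only: atLeastAtMost_iff) linarith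
          thus ?thesis using False by simp
        qed
        thus "ennreal (1 / s) * indicator {0<..} s * indicator S ((1 / s) *\<^sub>R x) * f x
            = (ennreal (1 / s) * indicator {norm x / 2..norm x} s) * f x"
          by (metis mult.assoc)
      qed
      also have "\<dots> = ennreal (ln 2) * f x"
        using x by (subst nn_integral_multc) (auto simp: ln2_int)
      finally show "(\<integral>\<^sup>+ s. ennreal (1 / s) * indicator {0<..} s * indicator S ((1 / s) *\<^sub>R x) * f x \<partial>lborel) = ennreal (ln 2) * f x" .
    qed
  qed
  also have "\<dots> = ennreal (ln 2) * (\<integral>\<^sup>+ x. f x \<partial>lborel)"
    by (rule nn_integral_cmult) measurable
  finally show ?thesis .
qed



lemma shell_ball:
  defines "S \<equiv> {y::real^3. 1 \<le> norm y \<and> norm y \<le> 2}"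
  shows "(\<integral>\<^sup>+ y. indicator S y * ennreal (1 / (norm y)^3) \<partial>lborel) = ennreal (4 * pi * ln 2)"
proof -
  have Sm[measurable]: "S \<in> sets borel" unfolding S_def by measurable
  have inner: "(\<integral>\<^sup>+ s. indicator (cball (0::real^3) 1) (s *\<^sub>R y) * ennreal (s^2) * indicator {0<..} s \<partial>lborel)
      = ennreal ((1 / norm y)^3 / 3)" if y: "y \<in> S" for y
  proof -
    have ny: "norm y > 0" using y unfolding S_def by auto
    have "(\<integral>\<^sup>+ s. indicator (cball (0::real^3) 1) (s *\<^sub>R y) * ennreal (s^2) * indicator {0<..} s \<partial>lborel)
        = (\<integral>\<^sup>+ s. ennreal (s^2) * indicator {0..1 / norm y} s \<partial>lborel)"
    proof (rule nn_integral_cong)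
      fix s :: real
      show "indicator (cball (0::real^3) 1) (s *\<^sub>R y) * ennreal (s^2) * indicator {0<..} s = ennreal (s^2) * indicator {0..1 / norm y} s"
      proof (cases "s > 0")
        case True
        have "(s *\<^sub>R y \<in> cball 0 1) \<longleftrightarrow> s \<in> {0..1 / norm y}"
          using True ny by (auto simp: field_simps)
        thus ?thesis using True by (simp split: split_indicator)
      next
        case False
        thus ?thesis by (cases "s = 0") (auto split: split_indicator)
      qed
    qed
    also have "\<dots> = ennreal ((1 / norm y)^3 / 3 - 0^3 / 3)"
      by (rule nn_integral_FTC_Icc) (use ny in \<open>auto intro!: derivative_eq_intros simp: power2_eq_square\<close>)
    finally show ?thesis by simp
  qed
  have "(\<integral>\<^sup>+ y. indicator S y * ennreal ((1 / norm y)^3 / 3) \<partial>lborel)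
      = (\<integral>\<^sup>+ y. indicator S y * (\<integral>\<^sup>+ s. indicator (cball (0::real^3) 1) (s *\<^sub>R y) * ennreal (s^2) * indicator {0<..} s \<partial>lborel) \<partial>lborel)"
    by (rule nn_integral_cong) (auto simp: inner split: split_indicator)
  also have "\<dots> = ennreal (ln 2) * (\<integral>\<^sup>+ x. indicator (cball (0::real^3) 1) x \<partial>lborel)"
    unfolding S_def by (rule shell) (intro borel_measurable_indicator borel_closed closed_cball)
  also have "\<dots> = ennreal (ln 2) * ennreal (4 * pi / 3)"
    by (simp add: emeasure_cball eval_unit_ball_vol)
  finally have A: "(\<integral>\<^sup>+ y. indicator S y * ennreal ((1 / norm y)^3 / 3) \<partial>lborel) = ennreal (ln 2 * (4 * pi / 3))"
    by (simp add: ennreal_mult[symmetric])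
  have "(\<integral>\<^sup>+ y. indicator S y * ennreal (1 / (norm y)^3) \<partial>lborel) = (\<integral>\<^sup>+ y. ennreal 3 * (indicator S y * ennreal ((1 / norm y)^3 / 3)) \<partial>lborel)"
  proof (rule nn_integral_cong)
    fix y :: "real^3"
    have "ennreal 3 * ennreal ((1 / norm y)^3 / 3) = ennreal (3 * ((1 / norm y)^3 / 3))"
      by (rule ennreal_mult[symmetric]) auto
    also have "\<dots> = ennreal (1 / (norm y)^3)" by (simp add: power_divide)
    finally show "indicator S y * ennreal (1 / (norm y)^3) = ennreal 3 * (indicator S y * ennreal ((1 / norm y)^3 / 3))"
      by (metis mult.left_commute)
  qed
  also have "\<dots> = ennreal 3 * ennreal (ln 2 * (4 * pi / 3))"
    by (subst nn_integral_cmult) (auto simp: A)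
  also have "\<dots> = ennreal (3 * (ln 2 * (4 * pi / 3)))" by (rule ennreal_mult[symmetric]) auto
  also have "\<dots> = ennreal (4 * pi * ln 2)" by simp
  finally show ?thesis .
qed



lemma optical_path_meas:
  assumes [measurable]: "s0 \<in> borel_measurable borel"
  shows "(\<lambda>(r,r'). optical_path s0 r r') \<in> borel_measurable (borel \<Otimes>\<^sub>M borel)"
proof -
  have "(\<lambda>q::((real^3)\<times>(real^3))\<times>real. indicator {0..1} (snd q) *\<^sub>R s0 (fst (fst q) + snd q *\<^sub>R (snd (fst q) - fst (fst q)))) \<in> borel_measurable ((borel \<Otimes>\<^sub>M borel) \<Otimes>\<^sub>M borel)"
    by measurable
  hence "(\<lambda>(p,t). indicator {0..1} t *\<^sub>R s0 (fst p + t *\<^sub>R (snd p - fst p))) \<in> borel_measurable ((borel \<Otimes>\<^sub>M borel) \<Otimes>\<^sub>M lborel)"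
    by (subst measurable_cong_sets[OF sets_pair_measure_cong[OF refl sets_lborel] refl])
       (simp add: case_prod_beta)
  hence "(\<lambda>p. LINT t:{0..1}|lborel. s0 (fst p + t *\<^sub>R (snd p - fst p))) \<in> borel_measurable (borel \<Otimes>\<^sub>M borel)"
    unfolding set_lebesgue_integral_def by (rule lborel.borel_measurable_lebesgue_integral)
  thus ?thesis unfolding optical_path_def case_prod_beta by measurable
qed

lemma kernel_meas:
  assumes [measurable]: "s0 \<in> borel_measurable borel"
  shows "(\<lambda>(r,r'). transport_kernel s0 r r') \<in> borel_measurable (borel \<Otimes>\<^sub>M borel)"
  using optical_path_meas[OF assms] unfolding transport_kernel_def case_prod_beta by measurable



lemma kernel_bound:
  fixes s0 :: "real^3 \<Rightarrow> real" and Mb :: real and r :: "real^3"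
  assumes sm[measurable]: "s0 \<in> borel_measurable borel" and nn: "\<And>x. 0 \<le> s0 x" and bd: "\<And>x. s0 x \<le> Mb"
  shows "(\<integral>\<^sup>+ r'. ennreal (transport_kernel s0 r r' * s0 r') \<partial>lborel) \<le> 1"
proof -
  have km[measurable]: "(\<lambda>r'. transport_kernel s0 r r') \<in> borel_measurable borel"
    using measurable_compose[OF measurable_Pair1'[of r borel] kernel_meas[OF sm]] by simp
  define h where "h x = ennreal (transport_kernel s0 r (r + x) * s0 (r + x))" for x
  have hm[measurable]: "h \<in> borel_measurable borel" unfolding h_def by measurable
  have T: "(\<integral>\<^sup>+ r'. ennreal (transport_kernel s0 r r' * s0 r') \<partial>lborel) = (\<integral>\<^sup>+ x. h x \<partial>lborel)"
  proof -
    have "(\<integral>\<^sup>+ r'. ennreal (transport_kernel s0 r r' * s0 r') \<partial>lborel)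
        = (\<integral>\<^sup>+ r'. ennreal (transport_kernel s0 r r' * s0 r') \<partial>(distr lborel borel ((+) r)))"
      by (simp add: lborel_distr_plus)
    also have "\<dots> = (\<integral>\<^sup>+ x. h x \<partial>lborel)"
      unfolding h_def by (subst nn_integral_distr) auto
    finally show ?thesis .
  qed
  define S where "S = {y::real^3. 1 \<le> norm y \<and> norm y \<le> 2}"
  have Sm[measurable]: "S \<in> sets borel" unfolding S_def by measurable
  have inner: "(\<integral>\<^sup>+ s. h (s *\<^sub>R y) * ennreal (s^2) * indicator {0<..} s \<partial>lborel) \<le> ennreal (1 / (4 * pi * (norm y)^3))"
    if y: "y \<in> S" for y
  proof -
    have ny: "norm y > 0" using y unfolding S_def by auto
    define \<psi> where "\<psi> s = s0 (r + s *\<^sub>R y)" for s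
    have \<psi>m[measurable]: "\<psi> \<in> borel_measurable borel" unfolding \<psi>_def by measurable
    define F where "F s = (LINT u:{0..s}|lborel. \<psi> u)" for s
    have Fm[measurable]: "F \<in> borel_measurable borel" unfolding F_def[abs_def] by (rule indef_meas) simp
    have tau: "optical_path s0 r (r + s *\<^sub>R y) = norm y * F s" if s: "s > 0" for s
    proof -
      have "F s = (\<integral> u. indicator {0..s} u *\<^sub>R \<psi> u \<partial>lborel)"
        unfolding F_def set_lebesgue_integral_def ..
      also have "\<dots> = \<bar>s\<bar> *\<^sub>R (\<integral> x. indicator {0..s} (0 + s * x) *\<^sub>R \<psi> (0 + s * x) \<partial>lborel)"
        using s by (intro lborel_integral_real_affine) simp
      also have "(\<lambda>x. indicator {0..s} (0 + s * x) *\<^sub>R \<psi> (0 + s * x)) = (\<lambda>x. indicator {0..1} x *\<^sub>R s0 (r + x *\<^sub>R (r + s *\<^sub>R y - r)))"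
      proof
        fix x
        have "(0 + s * x \<in> {0..s}) \<longleftrightarrow> x \<in> {0..1}" using s by (auto simp: zero_le_mult_iff)
        moreover have "\<psi> (0 + s * x) = s0 (r + x *\<^sub>R (r + s *\<^sub>R y - r))" unfolding \<psi>_def by (simp add: mult.commute)
        ultimately show "indicator {0..s} (0 + s * x) *\<^sub>R \<psi> (0 + s * x) = indicator {0..1} x *\<^sub>R s0 (r + x *\<^sub>R (r + s *\<^sub>R y - r))"
          by (simp split: split_indicator)
      qed
      finally have "F s = s * (LINT t:{0..1}|lborel. s0 (r + t *\<^sub>R (r + s *\<^sub>R y - r)))"
        using s unfolding set_lebesgue_integral_def by simp
      moreover have "norm (r - (r + s *\<^sub>R y)) = s * norm y" using s by simp
      ultimately show ?thesis unfolding optical_path_def using s by auto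
    qed
    have pt: "h (s *\<^sub>R y) * ennreal (s^2) * indicator {0<..} s
        = ennreal (\<psi> s * exp (- norm y * F s)) * indicator {0<..} s * ennreal (1 / (4 * pi * (norm y)^2))" for s
    proof (cases "s > 0")
      case False thus ?thesis by simp
    next
      case True
      have "transport_kernel s0 r (r + s *\<^sub>R y) * s0 (r + s *\<^sub>R y) * s^2 = \<psi> s * exp (- norm y * F s) * (1 / (4 * pi * (norm y)^2))"
        unfolding transport_kernel_def tau[OF True] \<psi>_def using True ny
        by (simp add: field_simps power2_eq_square)
      hence "ennreal (transport_kernel s0 r (r + s *\<^sub>R y) * s0 (r + s *\<^sub>R y) * s^2) = ennreal (\<psi> s * exp (- norm y * F s) * (1 / (4 * pi * (norm y)^2)))"
        by (simp only:)
      also have "\<dots> = ennreal (\<psi> s * exp (- norm y * F s)) * ennreal (1 / (4 * pi * (norm y)^2))"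
        by (rule ennreal_mult) (auto simp: \<psi>_def nn)
      finally have E: "ennreal (transport_kernel s0 r (r + s *\<^sub>R y) * s0 (r + s *\<^sub>R y) * s^2) = ennreal (\<psi> s * exp (- norm y * F s)) * ennreal (1 / (4 * pi * (norm y)^2))" .
      have "transport_kernel s0 r (r + s *\<^sub>R y) \<ge> 0" unfolding transport_kernel_def by simp
      hence "h (s *\<^sub>R y) * ennreal (s^2) = ennreal (transport_kernel s0 r (r + s *\<^sub>R y) * s0 (r + s *\<^sub>R y) * s^2)"
        unfolding h_def using nn by (simp add: ennreal_mult)
      with E True show ?thesis by simp
    qed
    have "(\<integral>\<^sup>+ s. h (s *\<^sub>R y) * ennreal (s^2) * indicator {0<..} s \<partial>lborel)
        = (\<integral>\<^sup>+ s. ennreal (\<psi> s * exp (- norm y * F s)) * indicator {0<..} s \<partial>lborel) * ennreal (1 / (4 * pi * (norm y)^2))"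
      unfolding pt by (rule nn_integral_multc) measurable
    also have "\<dots> \<le> ennreal (1 / norm y) * ennreal (1 / (4 * pi * (norm y)^2))"
      by (intro mult_right_mono one_dim[OF \<psi>m _ _ ny, of Mb, folded F_def]) (auto simp: \<psi>_def nn bd)
    also have "\<dots> = ennreal (1 / (4 * pi * (norm y)^3))"
      using ny by (simp add: ennreal_mult[symmetric] power3_eq_cube power2_eq_square)
    finally show ?thesis .
  qed
  have "ennreal (ln 2) * (\<integral>\<^sup>+ x. h x \<partial>lborel) = (\<integral>\<^sup>+ y. indicator S y * (\<integral>\<^sup>+ s. h (s *\<^sub>R y) * ennreal (s^2) * indicator {0<..} s \<partial>lborel) \<partial>lborel)"
    unfolding S_def by (rule shell[symmetric]) measurable
  also have "\<dots> \<le> (\<integral>\<^sup>+ y. ennreal (1 / (4 * pi)) * (indicator S y * ennreal (1 / (norm y)^3)) \<partial>lborel)"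
  proof (rule nn_integral_mono)
    fix y :: "real^3"
    show "indicator S y * (\<integral>\<^sup>+ s. h (s *\<^sub>R y) * ennreal (s^2) * indicator {0<..} s \<partial>lborel) \<le> ennreal (1 / (4 * pi)) * (indicator S y * ennreal (1 / (norm y)^3))"
    proof (cases "y \<in> S")
      case True
      have "ennreal (1 / (4 * pi * (norm y)^3)) = ennreal (1 / (4 * pi)) * ennreal (1 / (norm y)^3)"
        by (simp add: ennreal_mult[symmetric])
      thus ?thesis using inner[OF True] True by simp
    qed simp
  qed
  also have "\<dots> = ennreal (1 / (4 * pi)) * ennreal (4 * pi * ln 2)"
    by (subst nn_integral_cmult) (auto simp: shell_ball[folded S_def])
  also have "\<dots> = ennreal (ln 2) * 1"
    by (simp add: ennreal_mult[symmetric])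
  finally have "ennreal (ln 2) * (\<integral>\<^sup>+ x. h x \<partial>lborel) \<le> ennreal (ln 2) * 1" .
  hence "(\<integral>\<^sup>+ x. h x \<partial>lborel) \<le> 1"
    by (subst (asm) ennreal_mult_le_mult_iff) auto
  thus ?thesis using T by simp
qed



lemma tk_nonneg: "transport_kernel s r r' \<ge> 0"
  unfolding transport_kernel_def by simp

lemma op_sym: "optical_path s r r' = optical_path s r' r"
proof -
  have "(LINT t:{0..1}|lborel. s (r + t *\<^sub>R (r' - r))) = (\<integral> t. indicator {0..1} t *\<^sub>R s (r + t *\<^sub>R (r' - r)) \<partial>lborel)"
    unfolding set_lebesgue_integral_def ..
  also have "\<dots> = \<bar>-1\<bar> *\<^sub>R (\<integral> x. indicator {0..1} (1 + (-1) * x) *\<^sub>R s (r + (1 + (-1) * x) *\<^sub>R (r' - r)) \<partial>lborel)"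
    by (rule lborel_integral_real_affine) simp
  also have "(\<lambda>x. indicator {0..1} (1 + (-1) * x) *\<^sub>R s (r + (1 + (-1) * x) *\<^sub>R (r' - r))) = (\<lambda>x. indicator {0..1} x *\<^sub>R s (r' + x *\<^sub>R (r - r')))"
  proof
    fix x :: real
    have "r + (1 + (-1) * x) *\<^sub>R (r' - r) = r' + x *\<^sub>R (r - r')" by (simp add: algebra_simps)
    moreover have "(1 + (-1) * x \<in> {0..1}) = (x \<in> {0..1})" by auto
    ultimately show "indicator {0..1} (1 + (-1) * x) *\<^sub>R s (r + (1 + (-1) * x) *\<^sub>R (r' - r)) = indicator {0..1} x *\<^sub>R s (r' + x *\<^sub>R (r - r'))"
      by (simp split: split_indicator)
  qed
  finally show ?thesis unfolding optical_path_def set_lebesgue_integral_def by (simp add: norm_minus_commute)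
qed

lemma tk_sym: "transport_kernel s r r' = transport_kernel s r' r"
  unfolding transport_kernel_def using op_sym[of s r r'] by (simp add: norm_minus_commute)

lemma tk_cong:
  assumes "convex V" "r \<in> V" "r' \<in> V" "\<And>x. x \<in> V \<Longrightarrow> s1 x = s2 x"
  shows "transport_kernel s1 r r' = transport_kernel s2 r r'"
proof -
  have pt: "indicator {0..1} t *\<^sub>R s1 (r + t *\<^sub>R (r' - r)) = indicator {0..1} t *\<^sub>R s2 (r + t *\<^sub>R (r' - r))" for t :: real
  proof (cases "t \<in> {0..1}")
    case t: True
    have "r + t *\<^sub>R (r' - r) = (1 - t) *\<^sub>R r + t *\<^sub>R r'" by (simp add: algebra_simps)
    also have "\<dots> \<in> V" using assms(1-3) t unfolding convex_def by auto
    finally show ?thesis using assms(4) by simp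
  qed simp
  have "(LINT t:{0..1}|lborel. s1 (r + t *\<^sub>R (r' - r))) = (LINT t:{0..1}|lborel. s2 (r + t *\<^sub>R (r' - r)))"
    unfolding set_lebesgue_integral_def pt ..
  thus ?thesis unfolding transport_kernel_def optical_path_def by simp
qed



theorem lemma4:
  fixes V :: "(real^3) set" and \<sigma> :: "real^3 \<Rightarrow> real" and \<sigma>min \<sigma>max :: real
    and g :: "real^3 \<Rightarrow> real"
  assumes "open V" and "convex V" and "bounded V" and "V \<noteq> {}"
    and "\<sigma> \<in> borel_measurable (restrict_space borel V)"
    and "0 < \<sigma>min" and "\<And>r. r \<in> V \<Longrightarrow> \<sigma>min \<le> \<sigma> r \<and> \<sigma> r \<le> \<sigma>max"
    and "in_L2 V g"
  shows "(L2_norm V (L_op V \<sigma> g))\<^sup>2 = L2_inner V g (L_op V \<sigma> (L_op V \<sigma> g))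
       \<and> L2_inner V g (L_op V \<sigma> (L_op V \<sigma> g)) \<le> (L2_norm V g)\<^sup>2"
proof -
  have Vb[measurable]: "V \<in> sets borel" using assms(1) by (rule borel_open)
  have Vl[measurable]: "V \<in> sets lebesgue" using Vb by simp
  define \<sigma>0 where "\<sigma>0 x = indicator V x *\<^sub>R \<sigma> x" for x
  have \<sigma>0m[measurable]: "\<sigma>0 \<in> borel_measurable borel"
    using assms(5) unfolding \<sigma>0_def[abs_def] by (subst (asm) borel_measurable_restrict_space_iff) auto
  have \<sigma>0l: "\<sigma>0 \<in> borel_measurable lborel" using \<sigma>0m by simp
  have \<sigma>0m'[measurable]: "\<sigma>0 \<in> borel_measurable lebesgue" using \<sigma>0l by (rule measurable_completion)
  have \<sigma>0V: "\<sigma>0 x = \<sigma> x" if "x \<in> V" for x using that unfolding \<sigma>0_def by simp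
  have \<sigma>0O: "\<sigma>0 x = 0" if "x \<notin> V" for x using that unfolding \<sigma>0_def by simp
  have \<sigma>0n: "0 \<le> \<sigma>0 x" for x using assms(6) assms(7)[of x] unfolding \<sigma>0_def
    by (auto split: split_indicator)
  have \<sigma>0b: "\<sigma>0 x \<le> max \<sigma>max 0" for x using assms(7)[of x] unfolding \<sigma>0_def
    by (auto split: split_indicator)
  have gm: "g \<in> borel_measurable (restrict_space lebesgue V)" and gi: "set_integrable lebesgue V (\<lambda>r. (g r)\<^sup>2)"
    using assms(8) unfolding in_L2_def by auto
  define g0 where "g0 x = indicator V x *\<^sub>R g x" for x
  have g0m[measurable]: "g0 \<in> borel_measurable lebesgue"
    using gm unfolding g0_def[abs_def] by (subst (asm) borel_measurable_restrict_space_iff) auto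
  obtain g1 where g1m[measurable]: "g1 \<in> borel_measurable lborel" and ae: "AE x in lborel. g0 x = g1 x"
    using completion_ex_borel_measurable_real[OF g0m] by blast
  have aeL: "AE x in lebesgue. g0 x = g1 x" using ae by (rule AE_completion)
  have g1m'[measurable]: "g1 \<in> borel_measurable lebesgue" using g1m by (rule measurable_completion)
  define kern where "kern r r' = indicator V r * indicator V r' * transport_kernel \<sigma>0 r r'" for r r'
  have km[measurable]: "(\<lambda>(x,y). kern x y) \<in> borel_measurable (lborel \<Otimes>\<^sub>M lborel)"
  proof -
    have [measurable]: "(\<lambda>(r,r'). transport_kernel \<sigma>0 r r') \<in> borel_measurable (borel \<Otimes>\<^sub>M borel)"
      by (rule kernel_meas) simp
    have "(\<lambda>(x,y). kern x y) \<in> borel_measurable (borel \<Otimes>\<^sub>M borel)"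
      unfolding kern_def by measurable
    thus ?thesis
      by (subst measurable_cong_sets[OF sets_pair_measure_cong[OF sets_lborel sets_lborel] refl])
  qed
  have kn: "kern x y \<ge> 0" for x y unfolding kern_def using tk_nonneg by simp
  have ks: "kern x y = kern y x" for x y unfolding kern_def using tk_sym by (simp add: mult_ac)
  have KB: "(\<integral>\<^sup>+ y. ennreal (kern x y * \<sigma>0 y) \<partial>lborel) \<le> 1" for x
  proof -
    have "(\<integral>\<^sup>+ y. ennreal (kern x y * \<sigma>0 y) \<partial>lborel) \<le> (\<integral>\<^sup>+ y. ennreal (transport_kernel \<sigma>0 x y * \<sigma>0 y) \<partial>lborel)"
      unfolding kern_def using tk_nonneg \<sigma>0n
      by (intro nn_integral_mono ennreal_leI) (auto simp: mult_nonneg_nonneg split: split_indicator)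
    also have "\<dots> \<le> 1" by (rule kernel_bound[OF \<sigma>0m \<sigma>0n \<sigma>0b])
    finally show ?thesis .
  qed
  have g0sq: "indicator V x *\<^sub>R (g x)\<^sup>2 = (g0 x)\<^sup>2" for x unfolding g0_def by (simp split: split_indicator)
  have g2L: "integrable lebesgue (\<lambda>x. (g0 x)\<^sup>2)"
    using gi unfolding set_integrable_def g0sq .
  have g2: "integrable lborel (\<lambda>x. (g1 x)\<^sup>2)"
  proof -
    have "integrable lebesgue (\<lambda>x. (g1 x)\<^sup>2)"
      using g2L by (subst integrable_cong_AE[where g="\<lambda>x. (g0 x)\<^sup>2"]) (use aeL in \<open>auto elim: AE_mp\<close>)
    thus ?thesis by (subst (asm) integrable_completion) auto
  qed
  define h where "h x = sqrt (\<sigma>0 x) * (\<integral> y. kern x y * (sqrt (\<sigma>0 y) * g1 y) \<partial>lborel)" for x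
  define Lh where "Lh x = sqrt (\<sigma>0 x) * (\<integral> y. kern x y * (sqrt (\<sigma>0 y) * h y) \<partial>lborel)" for x
  have A: "h \<in> borel_measurable lborel \<and> Lh \<in> borel_measurable lborel \<and> (\<integral> x. (h x)\<^sup>2 \<partial>lborel) = (\<integral> x. g1 x * Lh x \<partial>lborel) \<and> (\<integral> x. (h x)\<^sup>2 \<partial>lborel) \<le> (\<integral> x. (g1 x)\<^sup>2 \<partial>lborel)"
    unfolding h_def[abs_def] Lh_def[abs_def]
    by (rule abs_schur[OF sigma_finite_lborel km \<sigma>0l g1m kn \<sigma>0n ks KB g2])
  have hm[measurable]: "h \<in> borel_measurable lborel" and Lhm[measurable]: "Lh \<in> borel_measurable lborel"
    using A by auto
  have hm'[measurable]: "h \<in> borel_measurable lebesgue" using hm by (rule measurable_completion)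
  have Lhm'[measurable]: "Lh \<in> borel_measurable lebesgue" using Lhm by (rule measurable_completion)
  have tkV: "transport_kernel \<sigma> r r' = transport_kernel \<sigma>0 r r'" if "r \<in> V" "r' \<in> V" for r r'
    using that by (intro tk_cong[OF assms(2)]) (auto simp: \<sigma>0V)
  have kxm[measurable]: "(\<lambda>y. kern x y) \<in> borel_measurable lborel" for x
    using measurable_compose[OF measurable_Pair1'[of x lborel] km] by simp
  have kxm'[measurable]: "(\<lambda>y. kern x y) \<in> borel_measurable lebesgue" for x
    using kxm by (rule measurable_completion)
  have hO: "h r = 0" if "r \<notin> V" for r unfolding h_def using that by (simp add: \<sigma>0O)
  have LhO: "Lh r = 0" if "r \<notin> V" for r unfolding Lh_def using that by (simp add: \<sigma>0O)
  have C1: "L_op V \<sigma> g r = h r" if r: "r \<in> V" for r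
  proof -
    have [measurable]: "kern r \<in> borel_measurable lebesgue" using kxm'[of r] by simp
    have [measurable]: "kern r \<in> borel_measurable lborel" using kxm[of r] by simp
    have m1: "(\<lambda>r'. kern r r' * (sqrt (\<sigma>0 r') * g0 r')) \<in> borel_measurable lebesgue" by measurable
    have m2: "(\<lambda>r'. kern r r' * (sqrt (\<sigma>0 r') * g1 r')) \<in> borel_measurable lebesgue" by measurable
    have "K_op V \<sigma> (\<lambda>r'. sqrt (\<sigma> r') * g r') r = (\<integral> r'. indicator V r' *\<^sub>R (transport_kernel \<sigma> r r' * (sqrt (\<sigma> r') * g r')) \<partial>lebesgue)"
      unfolding K_op_def set_lebesgue_integral_def ..
    also have "\<dots> = (\<integral> r'. kern r r' * (sqrt (\<sigma>0 r') * g0 r') \<partial>lebesgue)"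
      by (rule Bochner_Integration.integral_cong) (use r in \<open>auto simp: kern_def g0_def tkV \<sigma>0V split: split_indicator\<close>)
    also have "\<dots> = (\<integral> r'. kern r r' * (sqrt (\<sigma>0 r') * g1 r') \<partial>lebesgue)"
      by (intro integral_cong_AE m1 m2) (use aeL in \<open>auto elim: AE_mp\<close>)
    also have "\<dots> = (\<integral> r'. kern r r' * (sqrt (\<sigma>0 r') * g1 r') \<partial>lborel)"
      by (rule integral_completion) measurable
    finally show ?thesis unfolding L_op_def h_def using r by (simp add: \<sigma>0V)
  qed
  have C2: "L_op V \<sigma> (L_op V \<sigma> g) r = Lh r" if r: "r \<in> V" for r
  proof -
    have [measurable]: "kern r \<in> borel_measurable lebesgue" using kxm'[of r] by simp
    have [measurable]: "kern r \<in> borel_measurable lborel" using kxm[of r] by simp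
    have "K_op V \<sigma> (\<lambda>r'. sqrt (\<sigma> r') * L_op V \<sigma> g r') r = (\<integral> r'. indicator V r' *\<^sub>R (transport_kernel \<sigma> r r' * (sqrt (\<sigma> r') * L_op V \<sigma> g r')) \<partial>lebesgue)"
      unfolding K_op_def set_lebesgue_integral_def ..
    also have "\<dots> = (\<integral> r'. kern r r' * (sqrt (\<sigma>0 r') * h r') \<partial>lebesgue)"
      by (rule Bochner_Integration.integral_cong) (use r in \<open>auto simp: kern_def C1 tkV \<sigma>0V split: split_indicator\<close>)
    also have "\<dots> = (\<integral> r'. kern r r' * (sqrt (\<sigma>0 r') * h r') \<partial>lborel)"
      by (rule integral_completion) measurable
    finally show ?thesis unfolding L_op_def Lh_def using r by (simp add: \<sigma>0V)
  qed
  have N1: "(L2_norm V (L_op V \<sigma> g))\<^sup>2 = (\<integral> x. (h x)\<^sup>2 \<partial>lborel)"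
  proof -
    have "(LINT r:V|lebesgue. (L_op V \<sigma> g r)\<^sup>2) = (\<integral> r. (h r)\<^sup>2 \<partial>lebesgue)"
      unfolding set_lebesgue_integral_def
      by (rule Bochner_Integration.integral_cong) (auto simp: C1 hO split: split_indicator)
    also have "\<dots> = (\<integral> r. (h r)\<^sup>2 \<partial>lborel)" by (rule integral_completion) measurable
    finally have E: "(LINT r:V|lebesgue. (L_op V \<sigma> g r)\<^sup>2) = (\<integral> r. (h r)\<^sup>2 \<partial>lborel)" .
    have "0 \<le> (\<integral> r. (h r)\<^sup>2 \<partial>lborel)" by simp
    thus ?thesis unfolding L2_norm_def E by simp
  qed
  have N2: "L2_inner V g (L_op V \<sigma> (L_op V \<sigma> g)) = (\<integral> x. g1 x * Lh x \<partial>lborel)"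
  proof -
    have m1: "(\<lambda>r. g0 r * Lh r) \<in> borel_measurable lebesgue" by measurable
    have m2: "(\<lambda>r. g1 r * Lh r) \<in> borel_measurable lebesgue" by measurable
    have "L2_inner V g (L_op V \<sigma> (L_op V \<sigma> g)) = (\<integral> r. g0 r * Lh r \<partial>lebesgue)"
      unfolding L2_inner_def set_lebesgue_integral_def
      by (rule Bochner_Integration.integral_cong) (auto simp: C2 g0_def split: split_indicator)
    also have "\<dots> = (\<integral> r. g1 r * Lh r \<partial>lebesgue)"
      by (intro integral_cong_AE m1 m2) (use aeL in \<open>auto elim: AE_mp\<close>)
    also have "\<dots> = (\<integral> r. g1 r * Lh r \<partial>lborel)" by (rule integral_completion) measurable
    finally show ?thesis .
  qed
  have N3: "(L2_norm V g)\<^sup>2 = (\<integral> x. (g1 x)\<^sup>2 \<partial>lborel)"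
  proof -
    have m1: "(\<lambda>r. (g0 r)\<^sup>2) \<in> borel_measurable lebesgue" by measurable
    have m2: "(\<lambda>r. (g1 r)\<^sup>2) \<in> borel_measurable lebesgue" by measurable
    have "(LINT r:V|lebesgue. (g r)\<^sup>2) = (\<integral> r. (g0 r)\<^sup>2 \<partial>lebesgue)"
      unfolding set_lebesgue_integral_def g0sq ..
    also have "\<dots> = (\<integral> r. (g1 r)\<^sup>2 \<partial>lebesgue)"
      by (intro integral_cong_AE m1 m2) (use aeL in \<open>auto elim: AE_mp\<close>)
    also have "\<dots> = (\<integral> r. (g1 r)\<^sup>2 \<partial>lborel)" by (rule integral_completion) measurable
    finally have E: "(LINT r:V|lebesgue. (g r)\<^sup>2) = (\<integral> r. (g1 r)\<^sup>2 \<partial>lborel)" .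
    have "0 \<le> (\<integral> r. (g1 r)\<^sup>2 \<partial>lborel)" by simp
    thus ?thesis unfolding L2_norm_def E by simp
  qed
  show ?thesis unfolding N1 N2 N3 using A by simp
qed

end
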